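(* Consider optimal control problem OCP-1 (described in the context), let $u_*^1$ be an optimal control with optimal trajectory $(s_*^1,e_*^1,i_*^1,j_*^1)$ and let $\psi_*=(\psi_1^*,\dots,\psi_4^* )$ be the corresponding adjoint function from the Pontryagin maximum principle. Suppose that at some moment $t_0\in[0,T)$ the inequality $A_*(t_0)<0$ holds. Then $\lambda_*^1(t_0)>0.5u_{\max}$.
   Context: Parameters: $\beta_1,\beta_2,\gamma,\rho_1,\rho_2>0$; $\sigma_1,\sigma_2>0$ with $\sigma_1+\sigma_2=1$; $0\le u_{\max}<1$; weights $\alpha_1,\alpha_2\ge0$, $\alpha_3>0$; horizon $T>0$; initial values $s_0,e_0,i_0,j_0>0$ with $s_0+e_0+i_0+j_0\le 1$. The admissible controls are all Lebesgue measurable $u:[0,T]\to[0,u_{\max}]$. The state system is $s'=-s(\beta_1(1-u)^2i+\beta_2(1-u)j)$, $e'=s(\beta_1(1-u)^2i+\beta_2(1-u)j)-\gamma e$, $i'=\sigma_1\gamma e-\rho_1 i$, $j'=\sigma_2\gamma e-\rho_2 j$, with $s(0)=s_0,e(0)=e_0,i(0)=i_0,j(0)=j_0$. OCP-1 is the problem of minimizing $Q(u)=\alpha_1(e(T)+i(T)+j(T))+\alpha_2\int_0^T(e+i+j)\,dt+0.5\alpha_3\int_0^Tu^2\,dt$ over admissible controls. Its Hamiltonian is $H(s,e,i,j,\psi_1,\dots,\psi_4,u)=-s(\beta_1(1-u)^2i+\beta_2(1-u)j)(\psi_1-\psi_2)-\gamma e(\psi_2-\sigma_1\psi_3-\sigma_2\psi_4)-\rho_1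 i\psi_3-\rho_2 j\psi_4-\alpha_2(e+i+j)-0.5\alpha_3u^2$. The adjoint function $\psi_*$ is a nontrivial solution of $\psi_1'=(\beta_1(1-u_*^1)^2i_*^1+\beta_2(1-u_*^1)j_*^1)(\psi_1-\psi_2)$, $\psi_2'=\gamma(\psi_2-\sigma_1\psi_3-\sigma_2\psi_4)+\alpha_2$, $\psi_3'=\beta_1(1-u_*^1)^2s_*^1(\psi_1-\psi_2)+\rho_1\psi_3+\alpha_2$, $\psi_4'=\beta_2(1-u_*^1)s_*^1(\psi_1-\psi_2)+\rho_2\psi_4+\alpha_2$, with $\psi_1(T)=0$, $\psi_2(T)=\psi_3(T)=\psi_4(T)=-\alpha_1$, and $u_*^1(t)$ maximizes $H(s_*^1(t),e_*^1(t),i_*^1(t),j_*^1(t),\psi_*(t),u)$ over $u\in[0,u_{\max}]$ for almost all $t$. Define $A_*(t)=\beta_1s_*^1(t)i_*^1(t)(\psi_1^*(t)-\psi_2^*(t))+0.5\alpha_3$, $B_*(t)=s_*^1(t)(2\beta_1i_*^1(t)+\beta_2j_*^1(t))(\psi_1^*(t)-\psi_2^*(t))$, and, whenever $A_*(t)\neq0$, the indicator function $\lambda_*^1(t)=0.5B_*(t)/A_*(t)$. *)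

theory Defs
  imports "HOL-Analysis.Analysis"
begin

definition foi :: "real \<Rightarrow> real \<Rightarrow> real \<Rightarrow> real \<Rightarrow> real \<Rightarrow> real \<Rightarrow> real" where
  "foi b1 b2 u s i j = s * (b1 * (1 - u)^2 * i + b2 * (1 - u) * j)"

definition admissible :: "real \<Rightarrow> real \<Rightarrow> (real \<Rightarrow> real) \<Rightarrow> bool" where
  "admissible umax T u \<longleftrightarrow>
     u \<in> borel_measurable (lebesgue_on {0..T}) \<and> (\<forall>t\<in>{0..T}. 0 \<le> u t \<and> u t \<le> umax)"

text \<open>(s,e,i,j) is a (Caratheodory, i.e. absolutely continuous) solution of the state system
  on [0,T] for control u, written in integral form.\<close>
definition is_trajectory ::
  "real \<Rightarrow> real \<Rightarrow> real \<Rightarrow> real \<Rightarrow> real \<Rightarrow> real \<Rightarrow> real \<Rightarrow> real \<Rightarrow>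
   real \<Rightarrow> real \<Rightarrow> real \<Rightarrow> real \<Rightarrow> (real \<Rightarrow> real) \<Rightarrow>
   (real \<Rightarrow> real) \<Rightarrow> (real \<Rightarrow> real) \<Rightarrow> (real \<Rightarrow> real) \<Rightarrow> (real \<Rightarrow> real) \<Rightarrow> bool" where
  "is_trajectory b1 b2 g r1 r2 sg1 sg2 T s0 e0 i0 j0 u s e i j \<longleftrightarrow>
     (\<forall>t\<in>{0..T}.
        ((\<lambda>\<tau>. - foi b1 b2 (u \<tau>) (s \<tau>) (i \<tau>) (j \<tau>)) has_integral (s t - s0)) {0..t} \<and>
        ((\<lambda>\<tau>. foi b1 b2 (u \<tau>) (s \<tau>) (i \<tau>) (j \<tau>) - g * e \<tau>) has_integral (e t - e0)) {0..t} \<and>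
        ((\<lambda>\<tau>. sg1 * g * e \<tau> - r1 * i \<tau>) has_integral (i t - i0)) {0..t} \<and>
        ((\<lambda>\<tau>. sg2 * g * e \<tau> - r2 * j \<tau>) has_integral (j t - j0)) {0..t})"

definition cost ::
  "real \<Rightarrow> real \<Rightarrow> real \<Rightarrow> real \<Rightarrow> (real \<Rightarrow> real) \<Rightarrow>
   (real \<Rightarrow> real) \<Rightarrow> (real \<Rightarrow> real) \<Rightarrow> (real \<Rightarrow> real) \<Rightarrow> real" where
  "cost a1 a2 a3 T u e i j =
     a1 * (e T + i T + j T) + a2 * integral {0..T} (\<lambda>t. e t + i t + j t)
     + 0.5 * a3 * integral {0..T} (\<lambda>t. (u t)^2)"

definition hamiltonian ::
  "real \<Rightarrow> real \<Rightarrow> real \<Rightarrow> real \<Rightarrow> real \<Rightarrow> real \<Rightarrow> real \<Rightarrow> real \<Rightarrow> real \<Rightarrow>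
   real \<Rightarrow> real \<Rightarrow> real \<Rightarrow> real \<Rightarrow> real \<Rightarrow> real \<Rightarrow> real \<Rightarrow> real \<Rightarrow> real \<Rightarrow> real" where
  "hamiltonian b1 b2 g r1 r2 sg1 sg2 a2 a3 s e i j p1 p2 p3 p4 u =
     - foi b1 b2 u s i j * (p1 - p2) - g * e * (p2 - sg1 * p3 - sg2 * p4)
     - r1 * i * p3 - r2 * j * p4 - a2 * (e + i + j) - 0.5 * a3 * u^2"

definition is_adjoint ::
  "real \<Rightarrow> real \<Rightarrow> real \<Rightarrow> real \<Rightarrow> real \<Rightarrow> real \<Rightarrow> real \<Rightarrow> real \<Rightarrow> real \<Rightarrow> real \<Rightarrow>
   (real \<Rightarrow> real) \<Rightarrow> (real \<Rightarrow> real) \<Rightarrow> (real \<Rightarrow> real) \<Rightarrow> (real \<Rightarrow> real) \<Rightarrow>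
   (real \<Rightarrow> real) \<Rightarrow> (real \<Rightarrow> real) \<Rightarrow> (real \<Rightarrow> real) \<Rightarrow> (real \<Rightarrow> real) \<Rightarrow> bool" where
  "is_adjoint b1 b2 g r1 r2 sg1 sg2 a1 a2 T u s i j p1 p2 p3 p4 \<longleftrightarrow>
     p1 T = 0 \<and> p2 T = - a1 \<and> p3 T = - a1 \<and> p4 T = - a1 \<and>
     (\<forall>t\<in>{0..T}.
        ((\<lambda>\<tau>. (b1 * (1 - u \<tau>)^2 * i \<tau> + b2 * (1 - u \<tau>) * j \<tau>) * (p1 \<tau> - p2 \<tau>))
            has_integral (p1 T - p1 t)) {t..T} \<and>
        ((\<lambda>\<tau>. g * (p2 \<tau> - sg1 * p3 \<tau> - sg2 * p4 \<tau>) + a2)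
            has_integral (p2 T - p2 t)) {t..T} \<and>
        ((\<lambda>\<tau>. b1 * (1 - u \<tau>)^2 * s \<tau> * (p1 \<tau> - p2 \<tau>) + r1 * p3 \<tau> + a2)
            has_integral (p3 T - p3 t)) {t..T} \<and>
        ((\<lambda>\<tau>. b2 * (1 - u \<tau>) * s \<tau> * (p1 \<tau> - p2 \<tau>) + r2 * p4 \<tau> + a2)
            has_integral (p4 T - p4 t)) {t..T})"

definition A_fun :: "real \<Rightarrow> real \<Rightarrow> real \<Rightarrow> real \<Rightarrow> real \<Rightarrow> real \<Rightarrow> real" where
  "A_fun b1 a3 s i p1 p2 = b1 * s * i * (p1 - p2) + 0.5 * a3"

definition B_fun :: "real \<Rightarrow> real \<Rightarrow> real \<Rightarrow> real \<Rightarrow> real \<Rightarrow> real \<Rightarrow> real \<Rightarrow> real" where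
  "B_fun b1 b2 s i j p1 p2 = s * (2 * b1 * i + b2 * j) * (p1 - p2)"

text \<open>Indicator function lambda = 0.5 B / A (meaningful when A \<noteq> 0).\<close>
definition lambda_fun :: "real \<Rightarrow> real \<Rightarrow> real \<Rightarrow> real \<Rightarrow> real \<Rightarrow> real \<Rightarrow> real \<Rightarrow> real \<Rightarrow> real" where
  "lambda_fun b1 b2 a3 s i j p1 p2 = 0.5 * B_fun b1 b2 s i j p1 p2 / A_fun b1 a3 s i p1 p2"

end

theory Submission imports Defs begin

lemma no_touch:
  fixes f :: "real \<Rightarrow> real"
  assumes "a < b" "continuous_on {a..b} f" "\<forall>x\<in>{a..b}. f x \<ge> 0"
    "\<forall>x\<in>{a..<b}. f x > 0" "K \<ge> 0" "\<forall>t\<in>{a..b}. f t \<le> K * integral {t..b} f"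
  shows False
proof -
  define t1 where "t1 = max a (b - 1/(2*K+2))"
  have t1: "a \<le> t1" "t1 < b" using assms(1,5) by (auto simp: t1_def)
  have "K * (b - t1) \<le> K * (1/(2*K+2))"
    using assms(5) by (intro mult_left_mono) (auto simp: t1_def)
  also have "\<dots> \<le> 1/2" using assms(5) by (simp add: field_simps)
  finally have Kb: "K * (b - t1) \<le> 1/2" .
  have cont: "continuous_on {t1..b} f" using t1 by (intro continuous_on_subset[OF assms(2)]) auto
  obtain c where c: "c \<in> {t1..b}" "\<forall>x\<in>{t1..b}. f x \<le> f c"
    using continuous_attains_sup[OF compact_Icc _ cont] t1 by auto
  have fc0: "f c \<ge> 0" using assms(3) c t1 by auto
  have "integral {c..b} f \<le> integral {c..b} (\<lambda>_. f c)"
    apply (rule integral_le)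
    using c by (auto intro!: integrable_continuous_interval continuous_on_subset[OF cont])
  also have "\<dots> = (b - c) * f c" using c by simp
  finally have "f c \<le> K * ((b - c) * f c)"
    using assms(6) c t1 assms(5) by (meson atLeastAtMost_iff dual_order.trans mult_left_mono)
  also have "\<dots> \<le> K * ((b - t1) * f c)"
    using c fc0 assms(5) by (intro mult_left_mono mult_right_mono) auto
  also have "\<dots> \<le> (1/2) * f c" using Kb fc0
    by (metis mult.assoc mult_right_mono)
  finally have "f c \<le> 0" by simp
  moreover have "f t1 > 0" using assms(4) t1 by auto
  moreover have "f t1 \<le> f c" using c(2) t1 by auto
  ultimately show False by linarith
qed

lemma prim:
  fixes f F :: "real \<Rightarrow> real"
  assumes h: "\<forall>t\<in>{0..T}. (f has_integral (F t - c)) {0..t}" and T: "0 \<le> T"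
  shows "continuous_on {0..T} F" "f integrable_on {0..T}"
    "\<And>t b. 0\<le>t \<Longrightarrow> t\<le>b \<Longrightarrow> b\<le>T \<Longrightarrow> (f has_integral (F b - F t)) {t..b}"
proof -
  show fi: "f integrable_on {0..T}" using h T by auto
  have eq: "\<And>t. t\<in>{0..T} \<Longrightarrow> F t = c + integral {0..t} f"
    using h by (metis add.commute diff_add_cancel integral_unique)
  show "continuous_on {0..T} F"
    using continuous_on_eq[OF continuous_on_add[OF continuous_on_const indefinite_integral_continuous_1[OF fi]]] eq
    by metis
  fix t b :: real assume tb: "0\<le>t" "t\<le>b" "b\<le>T"
  have fb: "f integrable_on {0..b}" using integrable_on_subinterval[OF fi] tb by auto
  have fs: "f integrable_on {t..b}" using integrable_on_subinterval[OF fi] tb by auto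
  have "integral {0..t} f + integral {t..b} f = integral {0..b} f"
    by (rule Henstock_Kurzweil_Integration.integral_combine[OF tb(1,2) fb])
  then have "integral {t..b} f = F b - F t" using eq tb by auto
  then show "(f has_integral (F b - F t)) {t..b}" using fs by (metis integrable_integral)
qed

lemma lim_nonneg:
  fixes f :: "real \<Rightarrow> real"
  assumes "0 < b" "continuous_on {0..b} f" "\<forall>x\<in>{0..<b}. f x > 0"
  shows "f b \<ge> 0"
proof -
  have cl: "closed ({0..b} \<inter> f -` {0..})"
    by (rule continuous_closed_preimage[OF assms(2)]) auto
  have "{0..<b} \<subseteq> {0..b} \<inter> f -` {0..}" using assms(3) by (auto simp: less_imp_le)
  then have "closure {0..<b} \<subseteq> {0..b} \<inter> f -` {0..}" by (rule closure_minimal[OF _ cl])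
  then show ?thesis using assms(1) by (auto simp: closure_atLeastLessThan subset_iff)
qed

lemma case_lin:
  fixes F p :: "real \<Rightarrow> real"
  assumes h: "((\<lambda>x. p x - k * F x) has_integral (F b - F t)) {t..b}"
    and pi: "p integrable_on {t..b}" and pn: "\<forall>x\<in>{t..b}. p x \<ge> 0"
    and c: "continuous_on {t..b} F" and Fb: "F b = 0"
  shows "F t \<le> k * integral {t..b} F"
proof -
  have Fi: "F integrable_on {t..b}" using c by (rule integrable_continuous_interval)
  have kFi: "(\<lambda>x. k * F x) integrable_on {t..b}" using integrable_on_cmult_left[OF Fi, of k] by simp
  have "integral {t..b} (\<lambda>x. p x - k * F x) = F b - F t" using h by (rule integral_unique)
  moreover have "integral {t..b} (\<lambda>x. p x - k * F x) = integral {t..b} p - k * integral {t..b} F"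
    using integral_diff[OF pi kFi] by simp
  moreover have "integral {t..b} p \<ge> 0" using pi pn by (intro integral_nonneg) auto
  ultimately show ?thesis using Fb by linarith
qed

lemma case_s:
  fixes F q :: "real \<Rightarrow> real"
  assumes h: "((\<lambda>x. - q x) has_integral (F b - F t)) {t..b}"
    and qb: "\<forall>x\<in>{t..b}. q x \<le> L * F x"
    and c: "continuous_on {t..b} F" and Fb: "F b = 0"
  shows "F t \<le> L * integral {t..b} F"
proof -
  have Fi: "F integrable_on {t..b}" using c by (rule integrable_continuous_interval)
  have h2: "(q has_integral (F t - F b)) {t..b}" using has_integral_neg[OF h] by simp
  have "integral {t..b} q \<le> integral {t..b} (\<lambda>x. L * F x)"
    using h2 integrable_on_cmult_left[OF Fi, of L] qb by (intro integral_le) auto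
  then show ?thesis using integral_unique[OF h2] Fb by simp
qed

theorem lemma4:
  fixes b1 b2 g r1 r2 sg1 sg2 umax a1 a2 a3 T s0 e0 i0 j0 t0 :: real
    and u s e i j p1 p2 p3 p4 :: "real \<Rightarrow> real"
  assumes params: "b1 > 0" "b2 > 0" "g > 0" "r1 > 0" "r2 > 0"
    and sig: "sg1 > 0" "sg2 > 0" "sg1 + sg2 = 1"
    and umax: "0 \<le> umax" "umax < 1"
    and weights: "a1 \<ge> 0" "a2 \<ge> 0" "a3 > 0"
    and horizon: "T > 0"
    and init: "s0 > 0" "e0 > 0" "i0 > 0" "j0 > 0" "s0 + e0 + i0 + j0 \<le> 1"
    and adm: "admissible umax T u"
    and traj: "is_trajectory b1 b2 g r1 r2 sg1 sg2 T s0 e0 i0 j0 u s e i j"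
    and optimal: "\<And>v s' e' i' j'. admissible umax T v \<Longrightarrow>
        is_trajectory b1 b2 g r1 r2 sg1 sg2 T s0 e0 i0 j0 v s' e' i' j' \<Longrightarrow>
        cost a1 a2 a3 T u e i j \<le> cost a1 a2 a3 T v e' i' j'"
    and adj: "is_adjoint b1 b2 g r1 r2 sg1 sg2 a1 a2 T u s i j p1 p2 p3 p4"
    and nontriv: "\<exists>t\<in>{0..T}. p1 t \<noteq> 0 \<or> p2 t \<noteq> 0 \<or> p3 t \<noteq> 0 \<or> p4 t \<noteq> 0"
    and maxcond: "AE t in lebesgue. t \<in> {0..T} \<longrightarrow>
        (\<forall>v\<in>{0..umax}.
           hamiltonian b1 b2 g r1 r2 sg1 sg2 a2 a3 (s t) (e t) (i t) (j t) (p1 t) (p2 t) (p3 t) (p4 t) v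
           \<le> hamiltonian b1 b2 g r1 r2 sg1 sg2 a2 a3 (s t) (e t) (i t) (j t) (p1 t) (p2 t) (p3 t) (p4 t) (u t))"
    and t0: "t0 \<in> {0..<T}"
    and Aneg: "A_fun b1 a3 (s t0) (i t0) (p1 t0) (p2 t0) < 0"
  shows "lambda_fun b1 b2 a3 (s t0) (i t0) (j t0) (p1 t0) (p2 t0) > 0.5 * umax"
proof -
  define fs where "fs = (\<lambda>x. foi b1 b2 (u x) (s x) (i x) (j x))"
  have T0: "0 \<le> T" using horizon by simp
  have ub: "\<And>x. x \<in> {0..T} \<Longrightarrow> 0 \<le> u x \<and> u x \<le> umax" using adm by (auto simp: admissible_def)
  have hs: "\<forall>t\<in>{0..T}. ((\<lambda>x. - fs x) has_integral (s t - s0)) {0..t}"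
   and he: "\<forall>t\<in>{0..T}. ((\<lambda>x. fs x - g * e x) has_integral (e t - e0)) {0..t}"
   and hi: "\<forall>t\<in>{0..T}. ((\<lambda>x. sg1 * g * e x - r1 * i x) has_integral (i t - i0)) {0..t}"
   and hj: "\<forall>t\<in>{0..T}. ((\<lambda>x. sg2 * g * e x - r2 * j x) has_integral (j t - j0)) {0..t}"
    using traj by (auto simp: is_trajectory_def fs_def)
  note ps = prim[OF hs T0] and pe = prim[OF he T0] and pi = prim[OF hi T0] and pj = prim[OF hj T0]
  have at0: "s 0 = s0" "e 0 = e0" "i 0 = i0" "j 0 = j0"
  proof -
    have "((\<lambda>x. - fs x) has_integral (s 0 - s0)) {0..0}" using bspec[OF hs, of 0] T0 by simp
    then have "s 0 - s0 = 0" by (metis has_integral_unique has_integral_refl(2) atLeastAtMost_singleton)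
    then show "s 0 = s0" by simp
    have "((\<lambda>x. fs x - g * e x) has_integral (e 0 - e0)) {0..0}" using bspec[OF he, of 0] T0 by simp
    then have "e 0 - e0 = 0" by (metis has_integral_unique has_integral_refl(2) atLeastAtMost_singleton)
    then show "e 0 = e0" by simp
    have "((\<lambda>x. sg1 * g * e x - r1 * i x) has_integral (i 0 - i0)) {0..0}" using bspec[OF hi, of 0] T0 by simp
    then have "i 0 - i0 = 0" by (metis has_integral_unique has_integral_refl(2) atLeastAtMost_singleton)
    then show "i 0 = i0" by simp
    have "((\<lambda>x. sg2 * g * e x - r2 * j x) has_integral (j 0 - j0)) {0..0}" using bspec[OF hj, of 0] T0 by simp
    then have "j 0 - j0 = 0" by (metis has_integral_unique has_integral_refl(2) atLeastAtMost_singleton)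
    then show "j 0 = j0" by simp
  qed
  have pos: "\<forall>t\<in>{0..T}. s t > 0 \<and> e t > 0 \<and> i t > 0 \<and> j t > 0"
  proof (rule ccontr)
    assume nn: "\<not> ?thesis"
    define Z where "Z = ({0..T} \<inter> s -` {..0}) \<union> ({0..T} \<inter> e -` {..0}) \<union> ({0..T} \<inter> i -` {..0}) \<union> ({0..T} \<inter> j -` {..0})"
    have clZ: "closed Z" unfolding Z_def
      by (intro closed_Un continuous_closed_preimage ps(1) pe(1) pi(1) pj(1)) auto
    have Zne: "Z \<noteq> {}" using nn unfolding Z_def by (auto simp: not_less)
    have bddZ: "bdd_below Z" unfolding Z_def by (rule bdd_belowI[of _ 0]) auto
    define b where "b = Inf Z"
    have bZ: "b \<in> Z" unfolding b_def by (rule closed_contains_Inf[OF Zne bddZ clZ])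
    have bT: "0 \<le> b" "b \<le> T" using bZ unfolding Z_def by auto
    have below: "\<And>x. x \<in> {0..<b} \<Longrightarrow> s x > 0 \<and> e x > 0 \<and> i x > 0 \<and> j x > 0"
    proof -
      fix x assume x: "x \<in> {0..<b}"
      have "x \<notin> Z" using x cInf_lower[OF _ bddZ, of x] unfolding b_def by auto
      then show "s x > 0 \<and> e x > 0 \<and> i x > 0 \<and> j x > 0" using x bT unfolding Z_def by auto
    qed
    have b0: "b > 0"
    proof (rule ccontr)
      assume "\<not> b > 0" then have "b = 0" using bT by simp
      then show False using bZ at0 init unfolding Z_def by auto
    qed
    have sub: "{0..b} \<subseteq> {0..T}" using bT by auto
    have cs: "continuous_on {0..b} s" using continuous_on_subset[OF ps(1) sub] .
    have ce: "continuous_on {0..b} e" using continuous_on_subset[OF pe(1) sub] .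
    have ci: "continuous_on {0..b} i" using continuous_on_subset[OF pi(1) sub] .
    have cj: "continuous_on {0..b} j" using continuous_on_subset[OF pj(1) sub] .
    have nb: "s b \<ge> 0" "e b \<ge> 0" "i b \<ge> 0" "j b \<ge> 0"
      using lim_nonneg[OF b0 cs] lim_nonneg[OF b0 ce] lim_nonneg[OF b0 ci] lim_nonneg[OF b0 cj] below by auto
    have nonneg: "\<And>x. x \<in> {0..b} \<Longrightarrow> s x \<ge> 0 \<and> e x \<ge> 0 \<and> i x \<ge> 0 \<and> j x \<ge> 0"
    proof -
      fix x assume x: "x \<in> {0..b}"
      show "s x \<ge> 0 \<and> e x \<ge> 0 \<and> i x \<ge> 0 \<and> j x \<ge> 0"
      proof (cases "x = b")
        case True then show ?thesis using nb by simp
      next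
        case False then show ?thesis using x below[of x] by auto
      qed
    qed
    have fsn: "\<And>x. x \<in> {0..b} \<Longrightarrow> fs x \<ge> 0"
    proof -
      fix x assume x: "x \<in> {0..b}"
      have "1 - u x \<ge> 0" using ub[of x] x sub umax by auto
      then show "fs x \<ge> 0" using nonneg[OF x] params unfolding fs_def foi_def
        by (intro mult_nonneg_nonneg add_nonneg_nonneg) auto
    qed
    have fsi: "\<And>t. t \<in> {0..b} \<Longrightarrow> fs integrable_on {t..b}"
    proof -
      fix t assume t: "t \<in> {0..b}"
      have "(\<lambda>x. - fs x) integrable_on {t..b}" using ps(3)[of t b] t bT by auto
      then show "fs integrable_on {t..b}" using integrable_neg by fastforce
    qed
    have nn: "\<forall>x\<in>{0..b}. s x \<ge> 0" "\<forall>x\<in>{0..b}. e x \<ge> 0" "\<forall>x\<in>{0..b}. i x \<ge> 0" "\<forall>x\<in>{0..b}. j x \<ge> 0"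
      using nonneg by blast+
    have pp: "\<forall>x\<in>{0..<b}. s x > 0" "\<forall>x\<in>{0..<b}. e x > 0" "\<forall>x\<in>{0..<b}. i x > 0" "\<forall>x\<in>{0..<b}. j x > 0"
      using below by blast+
    have bz: "s b = 0 \<or> e b = 0 \<or> i b = 0 \<or> j b = 0" using bZ nb unfolding Z_def by auto
    show False
    proof -
      { assume sb: "s b = 0"
        obtain Mi where Mi: "\<forall>x\<in>{0..T}. norm (i x) \<le> Mi"
          using compact_imp_bounded[OF compact_continuous_image[OF pi(1) compact_Icc]] 
          unfolding bounded_iff by auto
        obtain Mj where Mj: "\<forall>x\<in>{0..T}. norm (j x) \<le> Mj"
          using compact_imp_bounded[OF compact_continuous_image[OF pj(1) compact_Icc]] 
          unfolding bounded_iff by auto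
        define L where "L = b1 * Mi + b2 * Mj"
        have L0: "L \<ge> 0" using Mi Mj T0 params unfolding L_def
          by (metis add_nonneg_nonneg atLeastAtMost_iff dual_order.refl less_imp_le
              mult_nonneg_nonneg norm_ge_zero order_trans)
        have qb: "\<And>x. x \<in> {0..b} \<Longrightarrow> fs x \<le> L * s x"
        proof -
          fix x assume x: "x \<in> {0..b}"
          define w where "w = 1 - u x"
          have w: "0 \<le> w" "w \<le> 1" using ub[of x] x sub umax by (auto simp: w_def)
          have nx: "s x \<ge> 0" "i x \<ge> 0" "j x \<ge> 0" using nonneg[OF x] by auto
          have "w^2 \<le> 1" using w by (simp add: power_le_one)
          then have "w^2 * i x \<le> i x" using nx mult_right_mono[of "w^2" 1 "i x"] by simp
          also have "\<dots> \<le> Mi" using Mi x sub by force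
          finally have A: "b1 * (w^2 * i x) \<le> b1 * Mi" using params by simp
          have "w * j x \<le> j x" using nx w mult_right_mono[of w 1 "j x"] by simp
          also have "\<dots> \<le> Mj" using Mj x sub by force
          finally have B: "b2 * (w * j x) \<le> b2 * Mj" using params by simp
          have "b1 * w^2 * i x + b2 * w * j x \<le> L" using A B unfolding L_def by (simp add: mult.assoc)
          then have "s x * (b1 * w^2 * i x + b2 * w * j x) \<le> s x * L" using nx by (intro mult_left_mono) auto
          then show "fs x \<le> L * s x" unfolding fs_def foi_def w_def by (simp add: mult.commute)
        qed
        have "\<forall>t\<in>{0..b}. s t \<le> L * integral {t..b} s"
        proof
          fix t assume t: "t \<in> {0..b}"
          show "s t \<le> L * integral {t..b} s"
            by (rule case_s[OF ps(3)[of t b] _ _ sb]) (use t bT qb in \<open>auto intro: continuous_on_subset[OF cs]\<close>)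
        qed
        then have False by (rule no_touch[OF b0 cs nn(1) pp(1) L0]) }
      moreover
      { assume eb: "e b = 0"
        have ineqe: "\<forall>t\<in>{0..b}. e t \<le> g * integral {t..b} e"
        proof
          fix t assume t: "t \<in> {0..b}"
          show "e t \<le> g * integral {t..b} e"
            by (rule case_lin[OF pe(3)[of t b] fsi[OF t] _ _ eb]) (use t bT fsn in \<open>auto intro: continuous_on_subset[OF ce]\<close>)
        qed
        have False by (rule no_touch[OF b0 ce nn(2) pp(2) _ ineqe]) (use params in simp) }
      moreover
      { assume ib: "i b = 0"
        have ineqi: "\<forall>t\<in>{0..b}. i t \<le> r1 * integral {t..b} i"
        proof
          fix t assume t: "t \<in> {0..b}"
          have cet: "continuous_on {t..b} e" using t by (intro continuous_on_subset[OF ce]) auto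
          have cit: "continuous_on {t..b} i" using t by (intro continuous_on_subset[OF ci]) auto
          have ei: "(\<lambda>x. sg1 * g * e x) integrable_on {t..b}"
            using integrable_on_cmult_left[OF integrable_continuous_interval[OF cet], of "sg1 * g"] by simp
          have nni: "\<forall>x\<in>{t..b}. sg1 * g * e x \<ge> 0" using nn(2) t sig params by (auto intro!: mult_nonneg_nonneg less_imp_le)
          have tb: "0 \<le> t" "t \<le> b" using t by auto
          show "i t \<le> r1 * integral {t..b} i"
            by (rule case_lin[of "\<lambda>x. sg1 * g * e x", OF pi(3)[OF tb bT(2)] ei nni cit ib])
        qed
        have False by (rule no_touch[OF b0 ci nn(3) pp(3) _ ineqi]) (use params in simp) }
      moreover
      { assume jb: "j b = 0"
        have ineqj: "\<forall>t\<in>{0..b}. j t \<le> r2 * integral {t..b} j"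
        proof
          fix t assume t: "t \<in> {0..b}"
          have cet: "continuous_on {t..b} e" using t by (intro continuous_on_subset[OF ce]) auto
          have cjt: "continuous_on {t..b} j" using t by (intro continuous_on_subset[OF cj]) auto
          have ej: "(\<lambda>x. sg2 * g * e x) integrable_on {t..b}"
            using integrable_on_cmult_left[OF integrable_continuous_interval[OF cet], of "sg2 * g"] by simp
          have nnj: "\<forall>x\<in>{t..b}. sg2 * g * e x \<ge> 0" using nn(2) t sig params by (auto intro!: mult_nonneg_nonneg less_imp_le)
          have tb: "0 \<le> t" "t \<le> b" using t by auto
          show "j t \<le> r2 * integral {t..b} j"
            by (rule case_lin[of "\<lambda>x. sg2 * g * e x", OF pj(3)[OF tb bT(2)] ej nnj cjt jb])
        qed
        have False by (rule no_touch[OF b0 cj nn(4) pp(4) _ ineqj]) (use params in simp) }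
      ultimately show False using bz by blast
    qed
  qed
  have st: "s t0 > 0" "i t0 > 0" "j t0 > 0" using pos t0 by auto
  define D where "D = p1 t0 - p2 t0"
  define A where "A = A_fun b1 a3 (s t0) (i t0) (p1 t0) (p2 t0)"
  have Aeq: "A = b1 * s t0 * i t0 * D + a3 / 2" unfolding A_def A_fun_def D_def by simp
  have A0: "A < 0" using Aneg A_def by simp
  have "b1 * s t0 * i t0 * D < 0" using Aeq A0 weights by linarith
  moreover have P: "b1 * s t0 * i t0 > 0" using st params by simp
  ultimately have D0: "D < 0" using mult_less_0_iff[of "b1 * s t0 * i t0" D] by linarith
  have jD: "b2 * s t0 * j t0 * D < 0" using D0 st params by (simp add: mult_pos_neg)
  have Beq: "B_fun b1 b2 (s t0) (i t0) (j t0) (p1 t0) (p2 t0) = 2 * (b1 * s t0 * i t0 * D) + b2 * s t0 * j t0 * D"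
    unfolding B_fun_def D_def by (simp add: algebra_simps)
  have Blt: "B_fun b1 b2 (s t0) (i t0) (j t0) (p1 t0) (p2 t0) < umax * A"
  proof -
    have "umax * A \<ge> A" using A0 umax by (simp add: mult_le_cancel_right2 less_imp_le)
    then show ?thesis using Beq Aeq jD A0 weights by linarith
  qed
  have "0.5 * umax < 0.5 * B_fun b1 b2 (s t0) (i t0) (j t0) (p1 t0) (p2 t0) / A"
    using Blt A0 by (simp add: field_simps)
  then show ?thesis unfolding lambda_fun_def A_def by simp
qed

end
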